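(* An ST graph $G$ with no twins is WDI if and only if (i) $D=\mathrm{Join}(G)$ is transitive, and (ii) for every arc $a\to b$ of $D$ there exists a vertex $c$ of $D$ such that $a\to c$ and $c\to b$ are arcs of $D$.
   Context: A digraph is a finite vertex set $V$ with arc set $E\subseteq V\times V$. $N^+(v),N^-(v)$ are out-/in-neighborhoods, $N(v)=N^+(v)\cup N^-(v)$, $d(v)=|N(v)|$. Source: $N^-(v)=\emptyset$; sink: $N^+(v)=\emptyset$; ST graph: every vertex is a source or a sink. Two distinct vertices of an ST graph are twins if $N(v)=N(w)$. A vertex $u$ is transitive if $x\to y$ is an arc for all $x\in N^-(u)$, $y\in N^+(u)$; a digraph is transitive if all its vertices are. An arc $v\to w$ is disimplicial if $x\to y$ is an arc for all $x\in N^-(w)$, $y\in N^+(v)$. A diclique is a pair $(V,W)$ of nonempty vertex sets, written $V\to W$, with $v\to w$ an arc for all $v\in V,w\in W$; an arc $v\to w$ belongs to it if $v\in V,w\in W$; it is maximal if not properly contained componentwise in another diclique; it is reduced if maximal and containing a disimplicial arc. A digraph is WDI if every arc belongs to a reduced diclique. The thin neighbor $\theta(v)$ is the unique $x\in N(v)$ with $d(x)<d(z)$ for all $z\in N(v)\setminus\{x\}$ (undefined if none); an arc $v\to w$ is thin if $\theta(v)=w$ and $\theta(w)=v$; thin arcs form a matching $M$ (no two share an endpoint); $V(M)$ is its endpoint set. $\mathrm{Join}(G)$ is the digraph with a vertex $(v,v)$ for each $v\notin V(M)$ and a vertex $(v,w)$ for each $v\to w\in M$, with $(v,w)\to(x,y)$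 an arc iff $v\to y\in E(G)$. *)

theory Defs
  imports Main
begin

definition out_nb :: "('a \<times> 'a) set \<Rightarrow> 'a \<Rightarrow> 'a set" where
  "out_nb E v = {w. (v, w) \<in> E}"

definition in_nb :: "('a \<times> 'a) set \<Rightarrow> 'a \<Rightarrow> 'a set" where
  "in_nb E v = {u. (u, v) \<in> E}"

definition nb :: "('a \<times> 'a) set \<Rightarrow> 'a \<Rightarrow> 'a set" where
  "nb E v = out_nb E v \<union> in_nb E v"

definition deg :: "('a \<times> 'a) set \<Rightarrow> 'a \<Rightarrow> nat" where
  "deg E v = card (nb E v)"

definition is_source :: "('a \<times> 'a) set \<Rightarrow> 'a \<Rightarrow> bool" where
  "is_source E v \<longleftrightarrow> in_nb E v = {}"

definition is_sink :: "('a \<times> 'a) set \<Rightarrow> 'a \<Rightarrow> bool" where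
  "is_sink E v \<longleftrightarrow> out_nb E v = {}"

definition ST_graph :: "'a set \<Rightarrow> ('a \<times> 'a) set \<Rightarrow> bool" where
  "ST_graph V E \<longleftrightarrow> (\<forall>v\<in>V. is_source E v \<or> is_sink E v)"

definition twins :: "'a set \<Rightarrow> ('a \<times> 'a) set \<Rightarrow> 'a \<Rightarrow> 'a \<Rightarrow> bool" where
  "twins V E v w \<longleftrightarrow> v \<in> V \<and> w \<in> V \<and> v \<noteq> w \<and> nb E v = nb E w"

definition no_twins :: "'a set \<Rightarrow> ('a \<times> 'a) set \<Rightarrow> bool" where
  "no_twins V E \<longleftrightarrow> \<not> (\<exists>v w. twins V E v w)"

definition transitive_vertex :: "('a \<times> 'a) set \<Rightarrow> 'a \<Rightarrow> bool" where
  "transitive_vertex E u \<longleftrightarrow> (\<forall>x\<in>in_nb E u. \<forall>y\<in>out_nb E u. (x, y) \<in> E)"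

definition transitive_digraph :: "'a set \<Rightarrow> ('a \<times> 'a) set \<Rightarrow> bool" where
  "transitive_digraph V E \<longleftrightarrow> (\<forall>u\<in>V. transitive_vertex E u)"

definition disimplicial :: "('a \<times> 'a) set \<Rightarrow> 'a \<Rightarrow> 'a \<Rightarrow> bool" where
  "disimplicial E v w \<longleftrightarrow> (v, w) \<in> E \<and> (\<forall>x\<in>in_nb E w. \<forall>y\<in>out_nb E v. (x, y) \<in> E)"

definition diclique :: "'a set \<Rightarrow> ('a \<times> 'a) set \<Rightarrow> 'a set \<Rightarrow> 'a set \<Rightarrow> bool" where
  "diclique V E A B \<longleftrightarrow> A \<noteq> {} \<and> B \<noteq> {} \<and> A \<subseteq> V \<and> B \<subseteq> V \<and> A \<times> B \<subseteq> E"

definition maximal_diclique :: "'a set \<Rightarrow> ('a \<times> 'a) set \<Rightarrow> 'a set \<Rightarrow> 'a set \<Rightarrow> bool" where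
  "maximal_diclique V E A B \<longleftrightarrow> diclique V E A B \<and>
     \<not> (\<exists>A' B'. diclique V E A' B' \<and> A \<subseteq> A' \<and> B \<subseteq> B' \<and> (A, B) \<noteq> (A', B'))"

definition reduced_diclique :: "'a set \<Rightarrow> ('a \<times> 'a) set \<Rightarrow> 'a set \<Rightarrow> 'a set \<Rightarrow> bool" where
  "reduced_diclique V E A B \<longleftrightarrow> maximal_diclique V E A B \<and>
     (\<exists>v\<in>A. \<exists>w\<in>B. disimplicial E v w)"

definition WDI :: "'a set \<Rightarrow> ('a \<times> 'a) set \<Rightarrow> bool" where
  "WDI V E \<longleftrightarrow> (\<forall>(v, w)\<in>E. \<exists>A B. reduced_diclique V E A B \<and> v \<in> A \<and> w \<in> B)"

definition is_thin_nb :: "('a \<times> 'a) set \<Rightarrow> 'a \<Rightarrow> 'a \<Rightarrow> bool" where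
  "is_thin_nb E v x \<longleftrightarrow> x \<in> nb E v \<and> (\<forall>z\<in>nb E v - {x}. deg E x < deg E z)"

definition thin_arc :: "('a \<times> 'a) set \<Rightarrow> 'a \<Rightarrow> 'a \<Rightarrow> bool" where
  "thin_arc E v w \<longleftrightarrow> (v, w) \<in> E \<and> is_thin_nb E v w \<and> is_thin_nb E w v"

definition matched :: "('a \<times> 'a) set \<Rightarrow> 'a \<Rightarrow> bool" where
  "matched E v \<longleftrightarrow> (\<exists>w. thin_arc E v w \<or> thin_arc E w v)"

definition join_V :: "'a set \<Rightarrow> ('a \<times> 'a) set \<Rightarrow> ('a \<times> 'a) set" where
  "join_V V E = {(v, v) | v. v \<in> V \<and> \<not> matched E v} \<union> {(v, w) | v w. thin_arc E v w}"

definition join_E :: "'a set \<Rightarrow> ('a \<times> 'a) set \<Rightarrow> (('a \<times> 'a) \<times> ('a \<times> 'a)) set" where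
  "join_E V E = {((v, w), (x, y)) | v w x y.
      (v, w) \<in> join_V V E \<and> (x, y) \<in> join_V V E \<and> (v, y) \<in> E}"

end

theory Submission
  imports Defs
begin

lemma st_arc:
  assumes "E \<subseteq> V \<times> V" "ST_graph V E" "(x, y) \<in> E"
  shows "in_nb E x = {}" "out_nb E y = {}"
proof -
  have "x \<in> V" "y \<in> V" using assms by auto
  moreover have "out_nb E x \<noteq> {}" "in_nb E y \<noteq> {}" using assms(3) by (auto simp: out_nb_def in_nb_def)
  ultimately show "in_nb E x = {}" "out_nb E y = {}"
    using assms(2) unfolding ST_graph_def is_source_def is_sink_def by auto
qed

lemma fin_nb:
  assumes "finite V" "E \<subseteq> V \<times> V"
  shows "finite (nb E z)"
proof -
  have "nb E z \<subseteq> V" using assms(2) by (auto simp: nb_def out_nb_def in_nb_def)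
  thus ?thesis using assms(1) finite_subset by blast
qed

lemma disimp_thin:
  assumes "finite V" "E \<subseteq> V \<times> V" "ST_graph V E" "no_twins V E" "disimplicial E v w"
  shows "thin_arc E v w"
proof -
  have vw: "(v, w) \<in> E" using assms(5) by (simp add: disimplicial_def)
  have dis: "\<And>x y. (x, w) \<in> E \<Longrightarrow> (v, y) \<in> E \<Longrightarrow> (x, y) \<in> E"
    using assms(5) by (auto simp: disimplicial_def in_nb_def out_nb_def)
  have iv: "in_nb E v = {}" and ow: "out_nb E w = {}" using st_arc[OF assms(2,3) vw] by auto
  have t1: "is_thin_nb E v w"
    unfolding is_thin_nb_def
  proof (intro conjI ballI)
    show "w \<in> nb E v" using vw by (simp add: nb_def out_nb_def)
    fix z assume z: "z \<in> nb E v - {w}"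
    hence vz: "(v, z) \<in> E" using iv by (auto simp: nb_def out_nb_def)
    have oz: "out_nb E z = {}" using st_arc[OF assms(2,3) vz] by auto
    have sub: "nb E w \<subseteq> nb E z" using ow oz dis vz by (auto simp: nb_def in_nb_def out_nb_def)
    have "nb E w \<noteq> nb E z"
    proof
      assume "nb E w = nb E z"
      hence "twins V E w z" using z vw vz assms(2) by (auto simp: twins_def)
      thus False using assms(4) by (auto simp: no_twins_def)
    qed
    hence "nb E w \<subset> nb E z" using sub by blast
    thus "deg E w < deg E z" unfolding deg_def using psubset_card_mono fin_nb[OF assms(1,2)] by blast
  qed
  have t2: "is_thin_nb E w v"
    unfolding is_thin_nb_def
  proof (intro conjI ballI)
    show "v \<in> nb E w" using vw by (simp add: nb_def in_nb_def)
    fix z assume z: "z \<in> nb E w - {v}"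
    hence zw: "(z, w) \<in> E" using ow by (auto simp: nb_def in_nb_def out_nb_def)
    have iz: "in_nb E z = {}" using st_arc[OF assms(2,3) zw] by auto
    have sub: "nb E v \<subseteq> nb E z" using iv iz dis zw by (auto simp: nb_def in_nb_def out_nb_def)
    have "nb E v \<noteq> nb E z"
    proof
      assume "nb E v = nb E z"
      hence "twins V E v z" using z vw zw assms(2) by (auto simp: twins_def)
      thus False using assms(4) by (auto simp: no_twins_def)
    qed
    hence "nb E v \<subset> nb E z" using sub by blast
    thus "deg E v < deg E z" unfolding deg_def using psubset_card_mono fin_nb[OF assms(1,2)] by blast
  qed
  show ?thesis using vw t1 t2 by (simp add: thin_arc_def)
qed

lemma thin_uniq:
  assumes "thin_arc E p q" "thin_arc E v w" "(p, w) \<in> E" "(v, q) \<in> E"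
  shows "v = p \<and> w = q"
proof -
  have A: "is_thin_nb E q p" "is_thin_nb E w v" "is_thin_nb E p q" "is_thin_nb E v w"
    using assms(1,2) by (auto simp: thin_arc_def)
  have vp: "v = p"
  proof (rule ccontr)
    assume "v \<noteq> p"
    have "v \<in> nb E q - {p}" using assms(4) \<open>v \<noteq> p\<close> by (auto simp: nb_def in_nb_def)
    hence "deg E p < deg E v" using A(1) by (auto simp: is_thin_nb_def)
    moreover have "p \<in> nb E w - {v}" using assms(3) \<open>v \<noteq> p\<close> by (auto simp: nb_def in_nb_def)
    hence "deg E v < deg E p" using A(2) by (auto simp: is_thin_nb_def)
    ultimately show False by simp
  qed
  have "w = q"
  proof (rule ccontr)
    assume "w \<noteq> q"
    have "w \<in> nb E p - {q}" using assms(3) \<open>w \<noteq> q\<close> by (auto simp: nb_def out_nb_def)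
    hence "deg E q < deg E w" using A(3) by (auto simp: is_thin_nb_def)
    moreover have "q \<in> nb E p - {w}" using assms(4) vp \<open>w \<noteq> q\<close> by (auto simp: nb_def out_nb_def)
    hence "deg E w < deg E q" using A(4) vp by (auto simp: is_thin_nb_def)
    ultimately show False by simp
  qed
  thus ?thesis using vp by simp
qed

lemma src_vertex:
  assumes "E \<subseteq> V \<times> V" "ST_graph V E" "(x, y) \<in> E"
  shows "\<exists>x'. (x, x') \<in> join_V V E"
proof (cases "matched E x")
  case True
  then obtain w where "thin_arc E x w \<or> thin_arc E w x" by (auto simp: matched_def)
  moreover have "\<not> thin_arc E w x" using st_arc(1)[OF assms] by (auto simp: thin_arc_def in_nb_def)
  ultimately show ?thesis by (auto simp: join_V_def)
next
  case False
  thus ?thesis using assms(1,3) by (auto simp: join_V_def)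
qed

lemma snk_vertex:
  assumes "E \<subseteq> V \<times> V" "ST_graph V E" "(x, y) \<in> E"
  shows "\<exists>y'. (y', y) \<in> join_V V E"
proof (cases "matched E y")
  case True
  then obtain w where "thin_arc E y w \<or> thin_arc E w y" by (auto simp: matched_def)
  moreover have "\<not> thin_arc E y w" using st_arc(2)[OF assms] by (auto simp: thin_arc_def out_nb_def)
  ultimately show ?thesis by (auto simp: join_V_def)
next
  case False
  thus ?thesis using assms(1,3) by (auto simp: join_V_def)
qed

lemma disimp_reduced:
  assumes "E \<subseteq> V \<times> V" "disimplicial E p q"
  shows "reduced_diclique V E (in_nb E q) (out_nb E p)"
proof -
  have pq: "(p, q) \<in> E" using assms(2) by (simp add: disimplicial_def)
  have dc: "diclique V E (in_nb E q) (out_nb E p)"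
    using assms pq unfolding diclique_def disimplicial_def in_nb_def out_nb_def by blast
  have mx: "\<not> (\<exists>A' B'. diclique V E A' B' \<and> in_nb E q \<subseteq> A' \<and> out_nb E p \<subseteq> B'
            \<and> (in_nb E q, out_nb E p) \<noteq> (A', B'))"
  proof
    assume "\<exists>A' B'. diclique V E A' B' \<and> in_nb E q \<subseteq> A' \<and> out_nb E p \<subseteq> B'
            \<and> (in_nb E q, out_nb E p) \<noteq> (A', B')"
    then obtain A' B' where h: "diclique V E A' B'" "in_nb E q \<subseteq> A'" "out_nb E p \<subseteq> B'"
      "(in_nb E q, out_nb E p) \<noteq> (A', B')" by blast
    have "p \<in> A'" "q \<in> B'" using h(2,3) pq by (auto simp: in_nb_def out_nb_def)
    hence "A' \<subseteq> in_nb E q" "B' \<subseteq> out_nb E p" using h(1) by (auto simp: diclique_def in_nb_def out_nb_def)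
    thus False using h by auto
  qed
  have "p \<in> in_nb E q" "q \<in> out_nb E p" using pq by (auto simp: in_nb_def out_nb_def)
  thus ?thesis using dc mx assms(2) by (auto simp: reduced_diclique_def maximal_diclique_def)
qed

lemma join_V_cases:
  assumes "(p, q) \<in> join_V V E"
  shows "(p = q \<and> p \<in> V) \<or> thin_arc E p q"
  using assms by (auto simp: join_V_def)

theorem theorem14:
  fixes V :: "'a set" and E :: "('a \<times> 'a) set"
  assumes "finite V" and "E \<subseteq> V \<times> V"
    and "ST_graph V E" and "no_twins V E"
  shows "WDI V E \<longleftrightarrow>
           transitive_digraph (join_V V E) (join_E V E) \<and>
           (\<forall>(a, b)\<in>join_E V E. \<exists>c\<in>join_V V E. (a, c) \<in> join_E V E \<and> (c, b) \<in> join_E V E)"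
proof
  assume W: "WDI V E"
  have key: "\<And>x y. (x, y) \<in> E \<Longrightarrow> \<exists>v w. disimplicial E v w \<and> (x, w) \<in> E \<and> (v, y) \<in> E"
  proof -
    fix x y assume "(x, y) \<in> E"
    then obtain A B where "reduced_diclique V E A B" and "x \<in> A" "y \<in> B" using W by (auto simp: WDI_def)
    moreover have "A \<times> B \<subseteq> E" "\<exists>v\<in>A. \<exists>w\<in>B. disimplicial E v w" using \<open>reduced_diclique V E A B\<close>
      by (auto simp: reduced_diclique_def maximal_diclique_def diclique_def)
    ultimately show "\<exists>v w. disimplicial E v w \<and> (x, w) \<in> E \<and> (v, y) \<in> E"
      by blast
  qed
  have noloop: "\<And>p. p \<in> V \<Longrightarrow> (\<exists>a. (a, p) \<in> E) \<Longrightarrow> (\<exists>b. (p, b) \<in> E) \<Longrightarrow> False"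
  proof -
    fix p assume "p \<in> V" "\<exists>a. (a, p) \<in> E" "\<exists>b. (p, b) \<in> E"
    thus False using assms(3) by (auto simp: ST_graph_def is_source_def is_sink_def in_nb_def out_nb_def)
  qed
  have T: "transitive_digraph (join_V V E) (join_E V E)"
    unfolding transitive_digraph_def transitive_vertex_def
  proof (intro ballI)
    fix c a b assume c: "c \<in> join_V V E" and a: "a \<in> in_nb (join_E V E) c"
      and b: "b \<in> out_nb (join_E V E) c"
    obtain p q where cpq: "c = (p, q)" by (cases c)
    obtain a1 a2 where aa: "a = (a1, a2)" by (cases a)
    obtain b1 b2 where bb: "b = (b1, b2)" by (cases b)
    have ain: "a \<in> join_V V E" and a1q: "(a1, q) \<in> E" using a aa cpq by (auto simp: in_nb_def join_E_def)
    have bin: "b \<in> join_V V E" and pb2: "(p, b2) \<in> E" using b bb cpq by (auto simp: out_nb_def join_E_def)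
    have "thin_arc E p q" using join_V_cases[of p q V E] c cpq noloop a1q pb2 by auto
    hence pq: "(p, q) \<in> E" by (simp add: thin_arc_def)
    then obtain v w where d: "disimplicial E v w" "(p, w) \<in> E" "(v, q) \<in> E" using key by blast
    have "v = p \<and> w = q"
      using thin_uniq[OF \<open>thin_arc E p q\<close> disimp_thin[OF assms d(1)] d(2,3)] .
    hence "(a1, b2) \<in> E" using d(1) a1q pb2 by (auto simp: disimplicial_def in_nb_def out_nb_def)
    thus "(a, b) \<in> join_E V E" using ain bin aa bb by (auto simp: join_E_def)
  qed
  have P: "\<forall>(a, b)\<in>join_E V E. \<exists>c\<in>join_V V E. (a, c) \<in> join_E V E \<and> (c, b) \<in> join_E V E"
  proof (intro ballI, clarify)
    fix a1 a2 b1 b2 assume ab: "((a1, a2), (b1, b2)) \<in> join_E V E"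
    hence ain: "(a1, a2) \<in> join_V V E" and bin: "(b1, b2) \<in> join_V V E" and e: "(a1, b2) \<in> E"
      by (auto simp: join_E_def)
    obtain v w where d: "disimplicial E v w" "(a1, w) \<in> E" "(v, b2) \<in> E" using key[OF e] by blast
    have "(v, w) \<in> join_V V E" using disimp_thin[OF assms d(1)] by (auto simp: join_V_def)
    thus "\<exists>c\<in>join_V V E. ((a1, a2), c) \<in> join_E V E \<and> (c, (b1, b2)) \<in> join_E V E"
      using ain bin d by (auto simp: join_E_def)
  qed
  show "transitive_digraph (join_V V E) (join_E V E) \<and>
           (\<forall>(a, b)\<in>join_E V E. \<exists>c\<in>join_V V E. (a, c) \<in> join_E V E \<and> (c, b) \<in> join_E V E)"
    using T P by blast
next
  assume H: "transitive_digraph (join_V V E) (join_E V E) \<and>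
           (\<forall>(a, b)\<in>join_E V E. \<exists>c\<in>join_V V E. (a, c) \<in> join_E V E \<and> (c, b) \<in> join_E V E)"
  have T: "\<And>c a b. c \<in> join_V V E \<Longrightarrow> (a, c) \<in> join_E V E \<Longrightarrow> (c, b) \<in> join_E V E \<Longrightarrow> (a, b) \<in> join_E V E"
    using H unfolding transitive_digraph_def transitive_vertex_def in_nb_def out_nb_def by blast
  have P: "\<And>a b. (a, b) \<in> join_E V E \<Longrightarrow> \<exists>c\<in>join_V V E. (a, c) \<in> join_E V E \<and> (c, b) \<in> join_E V E"
    using H by blast
  have noloop: "\<And>p. p \<in> V \<Longrightarrow> (\<exists>a. (a, p) \<in> E) \<Longrightarrow> (\<exists>b. (p, b) \<in> E) \<Longrightarrow> False"
  proof -
    fix p assume "p \<in> V" "\<exists>a. (a, p) \<in> E" "\<exists>b. (p, b) \<in> E"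
    thus False using assms(3) by (auto simp: ST_graph_def is_source_def is_sink_def in_nb_def out_nb_def)
  qed
  show "WDI V E" unfolding WDI_def
  proof (clarify)
    fix x y assume xy: "(x, y) \<in> E"
    obtain x' where ax: "(x, x') \<in> join_V V E" using src_vertex[OF assms(2,3) xy] by blast
    obtain y' where bx: "(y', y) \<in> join_V V E" using snk_vertex[OF assms(2,3) xy] by blast
    have "((x, x'), (y', y)) \<in> join_E V E" using ax bx xy by (auto simp: join_E_def)
    then obtain c where c: "c \<in> join_V V E" "((x, x'), c) \<in> join_E V E" "(c, (y', y)) \<in> join_E V E"
      using P by blast
    obtain p q where cpq: "c = (p, q)" by (cases c)
    have xq: "(x, q) \<in> E" and py: "(p, y) \<in> E" using c(2,3) cpq by (auto simp: join_E_def)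
    have "thin_arc E p q" using join_V_cases[of p q V E] c(1) cpq noloop xq py by auto
    have dis: "disimplicial E p q"
      unfolding disimplicial_def
    proof (intro conjI ballI)
      show "(p, q) \<in> E" using \<open>thin_arc E p q\<close> by (simp add: thin_arc_def)
      fix u z assume u: "u \<in> in_nb E q" and z: "z \<in> out_nb E p"
      have uq: "(u, q) \<in> E" and pz: "(p, z) \<in> E" using u z by (auto simp: in_nb_def out_nb_def)
      obtain u' where "(u, u') \<in> join_V V E" using src_vertex[OF assms(2,3) uq] by blast
      moreover obtain z' where "(z', z) \<in> join_V V E" using snk_vertex[OF assms(2,3) pz] by blast
      ultimately have "((u, u'), c) \<in> join_E V E" "(c, (z', z)) \<in> join_E V E"
        using c(1) cpq uq pz by (auto simp: join_E_def)
      hence "((u, u'), (z', z)) \<in> join_E V E" using T c(1) by blast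
      thus "(u, z) \<in> E" by (auto simp: join_E_def)
    qed
    show "\<exists>A B. reduced_diclique V E A B \<and> x \<in> A \<and> y \<in> B"
      using disimp_reduced[OF assms(2) dis] xq py by (auto simp: in_nb_def out_nb_def)
  qed
qed

end
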